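(* Let $A_2\in\mathbf{C}^{n\times n}$. Then $\mathrm{e}^{t\{0,A_2\}}=\{\Phi_1(t),\Phi_2(t)\}$ for $t\in\mathbf{R}^+=[0,\infty)$ and $\{0,A_2\}^t=\{\Phi_1(t),\Phi_2(t)\}$ for $t\in\mathbf{Z}^+=\{0,1,2,\dots\}$, where $$\Phi_1(t)=\begin{cases}\sum_{i=0}^\infty\frac{t^{2i}}{(2i)!}(A_2^{\#}A_2)^i, & t\in\mathbf{R}^+,\\ (A_2^{\#}A_2)^{t/2}, & t\in\mathbf{Z}^+,\ t \text{ even},\\ 0, & t\in\mathbf{Z}^+,\ t\text{ odd},\end{cases}\qquad \Phi_2(t)=\begin{cases}\sum_{i=0}^\infty\frac{t^{2i+1}}{(2i+1)!}A_2(A_2^{\#}A_2)^i, & t\in\mathbf{R}^+,\\ 0, & t\in\mathbf{Z}^+,\ t \text{ even},\\ A_2(A_2^{\#}A_2)^{(t-1)/2}, & t\in\mathbf{Z}^+,\ t\text{ odd}.\end{cases}$$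
   Context: $P^{\#}$ denotes entrywise conjugate. For $A_1,A_2\in\mathbf{C}^{n\times n}$ the bimatrix $\{A_1,A_2\}$ is the real-linear map $x\mapsto A_1x+A_2^{\#}x^{\#}$ on $\mathbf{C}^n$; products are compositions and equality means equality as maps. Powers: $\{A_1,A_2\}^0=\{I_n,0\}$, $\{A_1,A_2\}^i=\{A_1,A_2\}\{A_1,A_2\}^{i-1}$. Exponent: $\mathrm{e}^{t\{A_1,A_2\}}=\sum_{i=0}^\infty\frac{t^i}{i!}\{A_1,A_2\}^i$, $t\in\mathbf{R}$. *)

theory Defs
  imports "HOL-Analysis.Analysis"
begin

text \<open>Entrywise conjugate of vectors and matrices (the paper's P^#).\<close>
definition vconj :: "complex ^ 'n \<Rightarrow> complex ^ 'n" where
  "vconj x = (\<chi> i. cnj (x $ i))"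

definition mconj :: "complex ^ 'n ^ 'm \<Rightarrow> complex ^ 'n ^ 'm" where
  "mconj A = (\<chi> i j. cnj (A $ i $ j))"

text \<open>Ordinary matrix power (note: the built-in ^ on vec is entrywise).\<close>
primrec matpow :: "complex ^ 'n ^ 'n \<Rightarrow> nat \<Rightarrow> complex ^ 'n ^ 'n" where
  "matpow A 0 = mat 1"
| "matpow A (Suc k) = A ** matpow A k"

text \<open>The bimatrix {A1,A2} as the real-linear map x \<mapsto> A1 x + A2^# x^#.\<close>
definition bimat :: "complex ^ 'n ^ 'n \<Rightarrow> complex ^ 'n ^ 'n \<Rightarrow> complex ^ 'n \<Rightarrow> complex ^ 'n" where
  "bimat A1 A2 = (\<lambda>x. A1 *v x + mconj A2 *v vconj x)"

definition bimat_pow :: "complex ^ 'n ^ 'n \<Rightarrow> complex ^ 'n ^ 'n \<Rightarrow> nat \<Rightarrow> complex ^ 'n \<Rightarrow> complex ^ 'n" where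
  "bimat_pow A1 A2 i = (bimat A1 A2 ^^ i)"

definition bimat_exp :: "real \<Rightarrow> complex ^ 'n ^ 'n \<Rightarrow> complex ^ 'n ^ 'n \<Rightarrow> complex ^ 'n \<Rightarrow> complex ^ 'n" where
  "bimat_exp t A1 A2 = (\<lambda>x. \<Sum>i. (t ^ i / fact i) *\<^sub>R bimat_pow A1 A2 i x)"

end

theory Submission
  imports Defs
begin

lemma norm_vec_l1: "norm (x::'a::real_normed_vector^'n) \<le> (\<Sum>i\<in>UNIV. norm (x$i))"
  unfolding norm_vec_def by (rule L2_set_le_sum) auto

lemma entry_le: "norm ((A::complex^'n^'m) $ i $ j) \<le> norm A"
  by (rule order_trans[OF Finite_Cartesian_Product.norm_nth_le Finite_Cartesian_Product.norm_nth_le])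

lemma mv_norm: "norm ((A::complex^'n^'n) *v y) \<le> real CARD('n) ^ 2 * norm A * norm y"
proof -
  have row: "norm ((A *v y) $ i) \<le> real CARD('n) * norm A * norm y" for i
  proof -
    have "norm ((A *v y) $ i) = norm (\<Sum>j\<in>UNIV. A$i$j * y$j)"
      by (simp add: matrix_vector_mult_def)
    also have "\<dots> \<le> (\<Sum>j\<in>UNIV. norm (A$i$j) * norm (y$j))"
      by (rule order_trans[OF norm_sum]) (simp add: norm_mult)
    also have "\<dots> \<le> (\<Sum>j\<in>(UNIV::'n set). norm A * norm y)"
      by (intro sum_mono mult_mono; simp add: entry_le Finite_Cartesian_Product.norm_nth_le)
    finally show ?thesis by simp
  qed
  have "norm (A *v y) \<le> (\<Sum>i\<in>(UNIV::'n set). real CARD('n) * norm A * norm y)"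
    by (rule order_trans[OF norm_vec_l1]) (intro sum_mono row)
  thus ?thesis by (simp add: power2_eq_square)
qed

lemma mm_norm: "norm ((A::complex^'n^'n) ** (B::complex^'n^'n)) \<le> real CARD('n) ^ 3 * norm A * norm B"
proof -
  have ent: "norm ((A ** B) $ i $ j) \<le> real CARD('n) * norm A * norm B" for i j
  proof -
    have "norm ((A ** B) $ i $ j) = norm (\<Sum>k\<in>UNIV. A$i$k * B$k$j)"
      by (simp add: matrix_matrix_mult_def)
    also have "\<dots> \<le> (\<Sum>k\<in>UNIV. norm (A$i$k) * norm (B$k$j))"
      by (rule order_trans[OF norm_sum]) (simp add: norm_mult)
    also have "\<dots> \<le> (\<Sum>k\<in>(UNIV::'n set). norm A * norm B)"
      by (intro sum_mono mult_mono; simp add: entry_le)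
    finally show ?thesis by simp
  qed
  have row: "norm ((A ** B) $ i) \<le> real CARD('n) ^ 2 * norm A * norm B" for i
  proof -
    have "norm ((A ** B) $ i) \<le> (\<Sum>j\<in>(UNIV::'n set). real CARD('n) * norm A * norm B)"
      by (rule order_trans[OF norm_vec_l1]) (rule sum_mono, use ent in blast)
    thus ?thesis by (simp add: power2_eq_square)
  qed
  have "norm (A ** B) \<le> (\<Sum>i\<in>(UNIV::'n set). real CARD('n) ^ 2 * norm A * norm B)"
    by (rule order_trans[OF norm_vec_l1]) (intro sum_mono row)
  thus ?thesis by (simp add: power3_eq_cube power2_eq_square)
qed

lemma norm_vconj: "norm (vconj x) = norm x"
  by (simp add: norm_vec_def vconj_def)

lemma mconj_nth: "mconj P $ i = vconj (P $ i)"
  by (simp add: mconj_def vconj_def)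

lemma norm_mconj: "norm (mconj P) = norm P"
  by (simp only: norm_vec_def[of "mconj P"] norm_vec_def[of P] mconj_nth norm_vconj)

lemma vconj_mv: "vconj ((A::complex^'n^'m) *v x) = mconj A *v vconj x"
  by (simp add: vec_eq_iff vconj_def mconj_def matrix_vector_mult_def)

lemma mconj_mm: "mconj ((A::complex^'n^'m) ** B) = mconj A ** mconj B"
  by (simp add: vec_eq_iff mconj_def matrix_matrix_mult_def)

lemma mconj_mconj[simp]: "mconj (mconj A) = A"
  by (simp add: vec_eq_iff mconj_def)

lemma vconj_vconj[simp]: "vconj (vconj A) = A"
  by (simp add: vec_eq_iff vconj_def)

lemma mconj_0[simp]: "mconj 0 = 0"
  by (simp add: vec_eq_iff mconj_def)

lemma bl_mconj: "bounded_linear (mconj :: complex^'n^'m \<Rightarrow> _)"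
  apply (rule bounded_linear_intro[where K=1])
    apply (simp_all add: vec_eq_iff mconj_def norm_mconj[unfolded mconj_def])
  done

lemma mv_add: "((P::complex^'n^'n) + Q) *v y = P *v y + Q *v y"
  by (simp add: vec_eq_iff matrix_vector_mult_def sum.distrib algebra_simps)

lemma mv_scaleR: "((c::real) *\<^sub>R (P::complex^'n^'n)) *v x = c *\<^sub>R (P *v x)"
  by (simp add: vec_eq_iff matrix_vector_mult_def scaleR_sum_right)

lemma bl_mv: "bounded_linear (\<lambda>P::complex^'n^'n. P *v y)"
proof (rule bounded_linear_intro[where K="real CARD('n) ^ 2 * norm y"])
  fix P Q :: "complex^'n^'n" and c :: real
  show "(P + Q) *v y = P *v y + Q *v y" by (rule mv_add)
  show "(c *\<^sub>R P) *v y = c *\<^sub>R (P *v y)" by (rule mv_scaleR)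
  have "norm (P *v y) \<le> real CARD('n) ^ 2 * norm P * norm y" by (rule mv_norm)
  thus "norm (P *v y) \<le> norm P * (real CARD('n) ^ 2 * norm y)" by (simp add: algebra_simps)
qed

lemma sum_even_odd_split:
  fixes f :: "nat \<Rightarrow> 'a::comm_monoid_add"
  shows "(\<Sum>i<2*m. f i) = (\<Sum>k<m. f (2*k)) + (\<Sum>k<m. f (2*k+1))"
  by (induction m) (simp_all add: algebra_simps)

lemma suminf_split:
  fixes f :: "nat \<Rightarrow> 'a::real_normed_vector"
  assumes "summable f" "(\<lambda>k. f (2*k)) sums a" "(\<lambda>k. f (2*k+1)) sums b"
  shows "f sums (a + b)"
proof -
  have "(\<lambda>n. \<Sum>i<n. f i) \<longlonglongrightarrow> suminf f"
    using assms(1) summable_LIMSEQ by blast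
  hence "((\<lambda>n. \<Sum>i<n. f i) \<circ> (\<lambda>m. 2*m)) \<longlonglongrightarrow> suminf f"
    by (rule LIMSEQ_subseq_LIMSEQ) (simp add: strict_mono_def)
  hence 1: "(\<lambda>m. (\<Sum>k<m. f (2*k)) + (\<Sum>k<m. f (2*k+1))) \<longlonglongrightarrow> suminf f"
    by (simp add: o_def sum_even_odd_split)
  have 2: "(\<lambda>m. (\<Sum>k<m. f (2*k)) + (\<Sum>k<m. f (2*k+1))) \<longlonglongrightarrow> a + b"
    using assms(2,3) unfolding sums_def by (rule tendsto_add)
  have "suminf f = a + b" using 1 2 LIMSEQ_unique by blast
  thus ?thesis using assms(1) summable_sums by fastforce
qed

lemma bimat0: "bimat 0 A2 = (\<lambda>x. mconj A2 *v vconj x)"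
  by (simp add: bimat_def fun_eq_iff)

lemma bimat_r0: "bimat P 0 = (\<lambda>x. P *v x)"
  by (simp add: bimat_def fun_eq_iff)

lemma pow_even: "(bimat 0 A2 ^^ (2*k)) x = matpow (mconj A2 ** A2) k *v x"
proof (induction k)
  case 0 then show ?case by simp
next
  case (Suc k)
  have "(bimat 0 A2 ^^ (2*Suc k)) x = bimat 0 A2 (bimat 0 A2 ((bimat 0 A2 ^^ (2*k)) x))"
    by (simp add: mult_2)
  also have "\<dots> = bimat 0 A2 (bimat 0 A2 (matpow (mconj A2 ** A2) k *v x))"
    using Suc.IH by simp
  also have "\<dots> = matpow (mconj A2 ** A2) (Suc k) *v x"
    by (simp add: bimat0 vconj_mv mconj_mm matrix_vector_mul_assoc matrix_mul_assoc)
  finally show ?case .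
qed

lemma pow_odd: "(bimat 0 A2 ^^ (2*k+1)) x = mconj (A2 ** matpow (mconj A2 ** A2) k) *v vconj x"
proof -
  have "(bimat 0 A2 ^^ (2*k+1)) x = bimat 0 A2 ((bimat 0 A2 ^^ (2*k)) x)" by simp
  also have "\<dots> = bimat 0 A2 (matpow (mconj A2 ** A2) k *v x)" by (simp only: pow_even)
  finally show ?thesis by (simp add: pow_even bimat0 vconj_mv mconj_mm matrix_vector_mul_assoc)
qed

lemma mconj_scaleR: "mconj ((c::real) *\<^sub>R P) = c *\<^sub>R mconj P"
  by (simp add: vec_eq_iff mconj_def)

lemma matpow_norm: "norm (matpow M k) \<le> (real CARD('n) ^ 3 * norm M) ^ k * norm (mat 1 :: complex^'n^'n)"
  for M :: "complex^'n^'n"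
proof (induction k)
  case 0 then show ?case by simp
next
  case (Suc k)
  have "norm (matpow M (Suc k)) \<le> real CARD('n) ^ 3 * norm M * norm (matpow M k)"
    using mm_norm by simp
  also have "\<dots> \<le> real CARD('n) ^ 3 * norm M * ((real CARD('n) ^ 3 * norm M) ^ k * norm (mat 1 :: complex^'n^'n))"
    by (rule mult_left_mono[OF Suc]) simp
  finally show ?case by (simp add: mult.assoc)
qed

lemma fact_div_le: "(a::real) \<ge> 0 \<Longrightarrow> k \<le> m \<Longrightarrow> a / fact m \<le> a / fact k"
  by (intro divide_left_mono) (auto simp: fact_mono)

lemma B_norm: "norm (bimat 0 A2 y) \<le> (real CARD('n) ^ 2 * norm A2) * norm y"
  for A2 :: "complex^'n^'n"
  using mv_norm[of "mconj A2" "vconj y"] by (simp add: bimat0 norm_mconj norm_vconj)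

lemma Bpow_norm: "norm ((bimat 0 A2 ^^ i) x) \<le> (real CARD('n) ^ 2 * norm A2) ^ i * norm x"
  for A2 :: "complex^'n^'n"
proof (induction i)
  case 0 then show ?case by simp
next
  case (Suc i)
  have "norm ((bimat 0 A2 ^^ Suc i) x) \<le> (real CARD('n) ^ 2 * norm A2) * norm ((bimat 0 A2 ^^ i) x)"
    using B_norm by simp
  also have "\<dots> \<le> (real CARD('n) ^ 2 * norm A2) * ((real CARD('n) ^ 2 * norm A2) ^ i * norm x)"
    by (rule mult_left_mono[OF Suc]) simp
  finally show ?case by (simp add: mult.assoc)
qed

lemma summ_full:
  fixes A2 :: "complex^'n^'n"
  shows "summable (\<lambda>i. (t ^ i / fact i) *\<^sub>R (bimat 0 A2 ^^ i) x)"
proof (rule summable_comparison_test)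
  let ?L = "real CARD('n) ^ 2 * norm A2"
  show "summable (\<lambda>i. norm x * (inverse (fact i) * (\<bar>t\<bar> * ?L) ^ i))"
    by (intro summable_mult summable_exp)
  show "\<exists>N. \<forall>n\<ge>N. norm ((t ^ n / fact n) *\<^sub>R (bimat 0 A2 ^^ n) x) \<le> norm x * (inverse (fact n) * (\<bar>t\<bar> * ?L) ^ n)"
  proof (intro exI allI impI)
    fix n :: nat
    have "norm ((t ^ n / fact n) *\<^sub>R (bimat 0 A2 ^^ n) x) = \<bar>t\<bar> ^ n / fact n * norm ((bimat 0 A2 ^^ n) x)"
      by (simp add: power_abs)
    also have "\<dots> \<le> \<bar>t\<bar> ^ n / fact n * (?L ^ n * norm x)"
      by (rule mult_left_mono[OF Bpow_norm]) simp
    also have "\<dots> = norm x * (inverse (fact n) * (\<bar>t\<bar> * ?L) ^ n)"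
      by (simp add: power_mult_distrib field_simps)
    finally show "norm ((t ^ n / fact n) *\<^sub>R (bimat 0 A2 ^^ n) x) \<le> norm x * (inverse (fact n) * (\<bar>t\<bar> * ?L) ^ n)" .
  qed
qed

lemma summ_even:
  fixes M :: "complex^'n^'n"
  shows "summable (\<lambda>k. (t ^ (2 * k) / fact (2 * k)) *\<^sub>R matpow M k)"
proof (rule summable_comparison_test)
  let ?C = "real CARD('n) ^ 3 * norm M" and ?D = "norm (mat 1 :: complex^'n^'n)"
  show "summable (\<lambda>k. ?D * (inverse (fact k) * (t\<^sup>2 * ?C) ^ k))"
    by (intro summable_mult summable_exp)
  show "\<exists>N. \<forall>k\<ge>N. norm ((t ^ (2 * k) / fact (2 * k)) *\<^sub>R matpow M k) \<le> ?D * (inverse (fact k) * (t\<^sup>2 * ?C) ^ k)"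
  proof (intro exI allI impI)
    fix k :: nat
    have "norm ((t ^ (2 * k) / fact (2 * k)) *\<^sub>R matpow M k) = (t\<^sup>2) ^ k / fact (2 * k) * norm (matpow M k)"
      by (simp add: power_mult power_abs)
    also have "\<dots> \<le> (t\<^sup>2) ^ k / fact k * (?C ^ k * ?D)"
      by (intro mult_mono fact_div_le matpow_norm) auto
    also have "\<dots> = ?D * (inverse (fact k) * (t\<^sup>2 * ?C) ^ k)"
      by (simp add: power_mult_distrib field_simps)
    finally show "norm ((t ^ (2 * k) / fact (2 * k)) *\<^sub>R matpow M k) \<le> ?D * (inverse (fact k) * (t\<^sup>2 * ?C) ^ k)" .
  qed
qed

lemma summ_odd:
  fixes M A2 :: "complex^'n^'n"
  shows "summable (\<lambda>k. (t ^ (2 * k + 1) / fact (2 * k + 1)) *\<^sub>R (A2 ** matpow M k))"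
proof (rule summable_comparison_test)
  let ?C = "real CARD('n) ^ 3 * norm M" and ?D = "norm (mat 1 :: complex^'n^'n)"
  let ?K = "\<bar>t\<bar> * (real CARD('n) ^ 3 * norm A2) * ?D"
  show "summable (\<lambda>k. ?K * (inverse (fact k) * (t\<^sup>2 * ?C) ^ k))"
    by (intro summable_mult summable_exp)
  show "\<exists>N. \<forall>k\<ge>N. norm ((t ^ (2 * k + 1) / fact (2 * k + 1)) *\<^sub>R (A2 ** matpow M k)) \<le> ?K * (inverse (fact k) * (t\<^sup>2 * ?C) ^ k)"
  proof (intro exI allI impI)
    fix k :: nat
    have n1: "norm (A2 ** matpow M k) \<le> real CARD('n) ^ 3 * norm A2 * (?C ^ k * ?D)"
      by (rule order_trans[OF mm_norm]) (intro mult_left_mono matpow_norm; simp)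
    have "norm ((t ^ (2 * k + 1) / fact (2 * k + 1)) *\<^sub>R (A2 ** matpow M k)) = \<bar>t\<bar> * (t\<^sup>2) ^ k / fact (2 * k + 1) * norm (A2 ** matpow M k)"
      by (simp add: power_mult power_abs abs_mult)
    also have "\<dots> \<le> \<bar>t\<bar> * (t\<^sup>2) ^ k / fact k * (real CARD('n) ^ 3 * norm A2 * (?C ^ k * ?D))"
      by (intro mult_mono fact_div_le n1) auto
    also have "\<dots> = ?K * (inverse (fact k) * (t\<^sup>2 * ?C) ^ k)"
      by (simp add: power_mult_distrib field_simps)
    finally show "norm ((t ^ (2 * k + 1) / fact (2 * k + 1)) *\<^sub>R (A2 ** matpow M k)) \<le> ?K * (inverse (fact k) * (t\<^sup>2 * ?C) ^ k)" .
  qed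
qed

theorem corollary2:
  fixes A2 :: "complex ^ 'n ^ 'n"
  shows "(\<forall>t::real. t \<ge> 0 \<longrightarrow>
            bimat_exp t 0 A2 =
            bimat (\<Sum>i. (t ^ (2 * i) / fact (2 * i)) *\<^sub>R matpow (mconj A2 ** A2) i)
                  (\<Sum>i. (t ^ (2 * i + 1) / fact (2 * i + 1)) *\<^sub>R (A2 ** matpow (mconj A2 ** A2) i)))
       \<and> (\<forall>t::nat.
            bimat_pow 0 A2 t =
            bimat (if even t then matpow (mconj A2 ** A2) (t div 2) else 0)
                  (if even t then 0 else A2 ** matpow (mconj A2 ** A2) ((t - 1) div 2)))"
proof (intro conjI allI impI)
  define M where "M = mconj A2 ** A2"
  fix t :: nat
  show "bimat_pow 0 A2 t =
            bimat (if even t then matpow (mconj A2 ** A2) (t div 2) else 0)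
                  (if even t then 0 else A2 ** matpow (mconj A2 ** A2) ((t - 1) div 2))"
  proof (cases "even t")
    case True
    then obtain k where k: "t = 2 * k" by blast
    show ?thesis using k by (simp add: bimat_pow_def bimat_r0 fun_eq_iff pow_even)
  next
    case False
    then obtain k where k: "t = 2 * k + 1" using oddE by blast
    have "bimat_pow 0 A2 t = (\<lambda>x. mconj (A2 ** matpow (mconj A2 ** A2) k) *v vconj x)"
      unfolding k bimat_pow_def by (rule ext) (rule pow_odd)
    then show ?thesis using k by (simp add: bimat0)
  qed
next
  fix t :: real
  assume "t \<ge> 0"
  let ?M = "mconj A2 ** A2"
  let ?E = "\<lambda>k. (t ^ (2 * k) / fact (2 * k)) *\<^sub>R matpow ?M k"
  let ?O = "\<lambda>k. (t ^ (2 * k + 1) / fact (2 * k + 1)) *\<^sub>R (A2 ** matpow ?M k)"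
  show "bimat_exp t 0 A2 = bimat (suminf ?E) (suminf ?O)"
  proof (rule ext)
    fix x
    let ?f = "\<lambda>i. (t ^ i / fact i) *\<^sub>R (bimat 0 A2 ^^ i) x"
    have "(\<lambda>k. ?E k *v x) sums (suminf ?E *v x)"
      by (rule bounded_linear.sums[OF bl_mv summable_sums[OF summ_even]])
    moreover have "(\<lambda>k. ?E k *v x) = (\<lambda>k. ?f (2 * k))"
      by (simp add: fun_eq_iff mv_scaleR pow_even)
    ultimately have ev: "(\<lambda>k. ?f (2 * k)) sums (suminf ?E *v x)" by simp
    have "(\<lambda>k. mconj (?O k) *v vconj x) sums (mconj (suminf ?O) *v vconj x)"
      by (rule bounded_linear.sums[OF bounded_linear_compose[OF bl_mv bl_mconj] summable_sums[OF summ_odd]])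
    moreover have "(\<lambda>k. mconj (?O k) *v vconj x) = (\<lambda>k. ?f (2 * k + 1))"
      by (simp only: fun_eq_iff mconj_scaleR mv_scaleR pow_odd) simp
    ultimately have od: "(\<lambda>k. ?f (2 * k + 1)) sums (mconj (suminf ?O) *v vconj x)" by simp
    have "?f sums (suminf ?E *v x + mconj (suminf ?O) *v vconj x)"
      by (rule suminf_split[OF summ_full ev od])
    thus "bimat_exp t 0 A2 x = bimat (suminf ?E) (suminf ?O) x"
      by (simp add: bimat_exp_def bimat_pow_def bimat_def sums_iff)
  qed
qed

end
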